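(* Let $q,d\in\mathbb{N}$, $\mathcal J$ a partition of $[qd]$, $\mathcal K$ a partition of $[d]$, and $A$ a real $d$-tensor. Then \[ \|A\circ 1_{L(\mathcal K)}\|_{\mathcal J}\le 2^{|\mathcal K|(|\mathcal K|-1)/2}\|A\|_{\mathcal J}. \]
   Context: For $d$-tensors $A,B$ indexed by $[n]^d$, $A\circ B=(a_{\mathbf i}b_{\mathbf i})_{\mathbf i}$ is the Hadamard product; for $C\subseteq[n]^d$, $1_C$ is the $d$-tensor with entries $1$ on $C$ and $0$ elsewhere. For $\mathcal K=\{K_1,\dots,K_a\}$ a partition of $[d]$, $L(\mathcal K)=\{\mathbf i\in[n]^d: i_k=i_l\iff \exists j: k,l\in K_j\}$. For an $m$-tensor $B$ and a partition $\mathcal J=\{J_1,\dots,J_k\}$ of $[m]$, $\|B\|_{\mathcal J}:=\sup\{\sum_{\mathbf i\in[n]^m}b_{\mathbf i}\prod_{l=1}^kx^{(l)}_{\mathbf i_{J_l}}:x^{(l)}\in\mathbb{R}^{[n]^{J_l}},\|x^{(l)}\|_2\le1\}$. For a $d$-tensor $A$, $e_q(A)$ is the $qd$-tensor with $(e_q(A))_{i_1\dots i_{qd}}=a_{i_1i_{q+1}\dots i_{(d-1)q+1}}$ if $i_{kq+j}=i_{kq+1}$ for all $k=0,\dots,d-1$, $j=2,\dots,q$, and $0$ otherwise; for a partition $\mathcal J$ of $[qd]$, $\|A\|_{\mathcal J}:=\|e_q(A)\|_{\mathcal J}$. *)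

theory Defs
  imports "HOL-Analysis.Analysis" "HOL-Library.Disjoint_Sets"
begin

text \<open>Conventions: coordinates are 0-based, so [m] is {..<m} and [n] is {..<n}.
  A multi-index in [n]^D (D a finite set of coordinates) is an extensional
  function in PiE D (\<lambda>_. {..<n}). A real tensor indexed by [n]^D is a function
  (nat \<Rightarrow> nat) \<Rightarrow> real, only its values on that index set matter.\<close>

definition idx :: "nat \<Rightarrow> nat set \<Rightarrow> (nat \<Rightarrow> nat) set" where
  "idx n D = PiE D (\<lambda>_. {..<n})"

definition hadamard :: "((nat \<Rightarrow> nat) \<Rightarrow> real) \<Rightarrow> ((nat \<Rightarrow> nat) \<Rightarrow> real) \<Rightarrow> (nat \<Rightarrow> nat) \<Rightarrow> real" where
  "hadamard A B = (\<lambda>i. A i * B i)"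

definition ind_tensor :: "(nat \<Rightarrow> nat) set \<Rightarrow> (nat \<Rightarrow> nat) \<Rightarrow> real" where
  "ind_tensor C = (\<lambda>i. if i \<in> C then 1 else 0)"

definition Lset :: "nat \<Rightarrow> nat \<Rightarrow> nat set set \<Rightarrow> (nat \<Rightarrow> nat) set" where
  "Lset n d K = {i \<in> idx n {..<d}. \<forall>k<d. \<forall>l<d. (i k = i l \<longleftrightarrow> (\<exists>B\<in>K. k \<in> B \<and> l \<in> B))}"

definition pnorm :: "nat \<Rightarrow> nat \<Rightarrow> nat set set \<Rightarrow> ((nat \<Rightarrow> nat) \<Rightarrow> real) \<Rightarrow> real" where
  "pnorm n m J B = Sup {(\<Sum>i\<in>idx n {..<m}. B i * (\<Prod>Jl\<in>J. x Jl (restrict i Jl))) | x.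
       \<forall>Jl\<in>J. (\<Sum>j\<in>idx n Jl. (x Jl j)\<^sup>2) \<le> 1}"

text \<open>e_q(A) for a d-tensor A: a (q d)-tensor (0-based positions k*q + j, j<q).\<close>
definition e_q :: "nat \<Rightarrow> nat \<Rightarrow> ((nat \<Rightarrow> nat) \<Rightarrow> real) \<Rightarrow> (nat \<Rightarrow> nat) \<Rightarrow> real" where
  "e_q q d A = (\<lambda>i. if (\<forall>k<d. \<forall>j<q. i (k*q + j) = i (k*q))
                      then A (\<lambda>k\<in>{..<d}. i (k*q)) else 0)"

definition qnorm :: "nat \<Rightarrow> nat \<Rightarrow> nat \<Rightarrow> nat set set \<Rightarrow> ((nat \<Rightarrow> nat) \<Rightarrow> real) \<Rightarrow> real" where
  "qnorm n q d J A = pnorm n (q*d) J (e_q q d A)"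

end

theory Submission
  imports Defs
begin


definition adm :: "nat \<Rightarrow> nat set set \<Rightarrow> (nat set \<Rightarrow> (nat\<Rightarrow>nat) \<Rightarrow> real) \<Rightarrow> bool" where
  "adm n J x \<longleftrightarrow> (\<forall>Jl\<in>J. (\<Sum>j\<in>idx n Jl. (x Jl j)\<^sup>2) \<le> 1)"

definition FF :: "nat \<Rightarrow> nat \<Rightarrow> nat set set \<Rightarrow> ((nat\<Rightarrow>nat)\<Rightarrow>real) \<Rightarrow> (nat set \<Rightarrow> (nat\<Rightarrow>nat) \<Rightarrow> real) \<Rightarrow> real" where
  "FF n m J B x = (\<Sum>i\<in>idx n {..<m}. B i * (\<Prod>Jl\<in>J. x Jl (restrict i Jl)))"

lemma pnorm_alt: "pnorm n m J B = Sup {FF n m J B x | x. adm n J x}"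
  by (simp add: pnorm_def FF_def adm_def)

lemma finite_idx: "finite D \<Longrightarrow> finite (idx n D)"
  by (simp add: idx_def finite_PiE)

lemma restrict_idx:
  assumes "i \<in> idx n {..<m}" "Jl \<subseteq> {..<m}"
  shows "restrict i Jl \<in> idx n Jl"
  using assms by (auto simp: idx_def PiE_iff)

lemma abs_x_le:
  assumes "adm n J x" "Jl \<in> J" "finite Jl" "j \<in> idx n Jl"
  shows "\<bar>x Jl j\<bar> \<le> 1"
proof -
  have "(x Jl j)\<^sup>2 \<le> (\<Sum>j\<in>idx n Jl. (x Jl j)\<^sup>2)"
    by (rule member_le_sum) (use assms finite_idx in auto)
  also have "\<dots> \<le> 1" using assms by (auto simp: adm_def)
  finally show ?thesis by (simp add: abs_square_le_1)
qed

lemma blocks_sub: "partition_on {..<m} J \<Longrightarrow> Jl \<in> J \<Longrightarrow> Jl \<subseteq> {..<m}"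
  by (metis Sup_upper partition_onD1)

lemma FF_bound:
  assumes "partition_on {..<m} J" "adm n J x"
  shows "FF n m J B x \<le> (\<Sum>i\<in>idx n {..<m}. \<bar>B i\<bar>)"
  unfolding FF_def
proof (rule sum_mono)
  fix i assume i: "i \<in> idx n {..<m}"
  have "\<bar>\<Prod>Jl\<in>J. x Jl (restrict i Jl)\<bar> \<le> 1"
    unfolding abs_prod
  proof (rule prod_le_1)
    fix Jl assume "Jl \<in> J"
    then have sub: "Jl \<subseteq> {..<m}" using blocks_sub assms(1) by blast
    have fin: "finite Jl" using sub by (rule finite_subset) simp
    have "\<bar>x Jl (restrict i Jl)\<bar> \<le> 1"
      by (rule abs_x_le[OF assms(2) \<open>Jl \<in> J\<close> fin restrict_idx[OF i sub]])
    then show "0 \<le> \<bar>x Jl (restrict i Jl)\<bar> \<and> \<bar>x Jl (restrict i Jl)\<bar> \<le> 1"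
      by simp
  qed
  then have "\<bar>B i * (\<Prod>Jl\<in>J. x Jl (restrict i Jl))\<bar> \<le> \<bar>B i\<bar>"
    by (simp add: abs_mult mult_left_le)
  then show "B i * (\<Prod>Jl\<in>J. x Jl (restrict i Jl)) \<le> \<bar>B i\<bar>" by linarith
qed

lemma adm0: "adm n J (\<lambda>_ _. 0)" by (simp add: adm_def)

lemma bdd:
  assumes "partition_on {..<m} J"
  shows "bdd_above {FF n m J B x | x. adm n J x}"
  unfolding bdd_above_def
  by (rule exI[of _ "\<Sum>i\<in>idx n {..<m}. \<bar>B i\<bar>"]) (use FF_bound[OF assms] in blast)

lemma FF_le_pnorm:
  assumes "partition_on {..<m} J" "adm n J x"
  shows "FF n m J B x \<le> pnorm n m J B"
  unfolding pnorm_alt by (rule cSup_upper) (use assms bdd[OF assms(1)] in auto)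

lemma pnorm_le:
  assumes "\<And>x. adm n J x \<Longrightarrow> FF n m J B x \<le> c"
  shows "pnorm n m J B \<le> c"
  unfolding pnorm_alt by (rule cSup_least) (use assms adm0 in auto)

lemma pnorm_cong:
  assumes "\<And>i. i \<in> idx n {..<m} \<Longrightarrow> B i = B' i"
  shows "pnorm n m J B = pnorm n m J B'"
proof -
  have "FF n m J B x = FF n m J B' x" for x unfolding FF_def using assms by simp
  then show ?thesis by (simp add: pnorm_alt)
qed

lemma pnorm_sum:
  assumes "partition_on {..<m} J" "finite S"
  shows "pnorm n m J (\<lambda>i. \<Sum>s\<in>S. f s i) \<le> (\<Sum>s\<in>S. pnorm n m J (f s))"
proof (rule pnorm_le)
  fix x assume x: "adm n J x"
  have "FF n m J (\<lambda>i. \<Sum>s\<in>S. f s i) x = (\<Sum>s\<in>S. FF n m J (f s) x)"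
    unfolding FF_def sum_distrib_right by (rule sum.swap)
  also have "\<dots> \<le> (\<Sum>s\<in>S. pnorm n m J (f s))"
    by (rule sum_mono) (rule FF_le_pnorm[OF assms(1) x])
  finally show "FF n m J (\<lambda>i. \<Sum>s\<in>S. f s i) x \<le> (\<Sum>s\<in>S. pnorm n m J (f s))" .
qed

lemma FF_mult:
  assumes "partition_on {..<m} J" "adm n J x"
    and w: "\<And>Jl j. Jl \<in> J \<Longrightarrow> j \<in> idx n Jl \<Longrightarrow> \<bar>w Jl j\<bar> \<le> 1"
  shows "FF n m J (\<lambda>i. B i * (\<Prod>Jl\<in>J. w Jl (restrict i Jl))) x \<le> pnorm n m J B"
proof -
  define x' where "x' = (\<lambda>Jl j. x Jl j * w Jl j)"
  have "FF n m J (\<lambda>i. B i * (\<Prod>Jl\<in>J. w Jl (restrict i Jl))) x = FF n m J B x'"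
    unfolding FF_def x'_def by (simp add: prod.distrib mult_ac)
  moreover have "adm n J x'"
    unfolding adm_def
  proof
    fix Jl assume Jl: "Jl \<in> J"
    have "(\<Sum>j\<in>idx n Jl. (x' Jl j)\<^sup>2) \<le> (\<Sum>j\<in>idx n Jl. (x Jl j)\<^sup>2)"
    proof (rule sum_mono)
      fix j assume j: "j \<in> idx n Jl"
      have "(w Jl j)\<^sup>2 \<le> 1" using w[OF Jl j] by (simp add: abs_square_le_1)
      then have "(x Jl j)\<^sup>2 * (w Jl j)\<^sup>2 \<le> (x Jl j)\<^sup>2"
        by (simp add: mult_left_le)
      then show "(x' Jl j)\<^sup>2 \<le> (x Jl j)\<^sup>2" by (simp add: x'_def power_mult_distrib)
    qed
    also have "\<dots> \<le> 1" using assms(2) Jl by (auto simp: adm_def)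
    finally show "(\<Sum>j\<in>idx n Jl. (x' Jl j)\<^sup>2) \<le> 1" .
  qed
  ultimately show ?thesis using FF_le_pnorm[OF assms(1)] by simp
qed



lemma block_ex:
  assumes "partition_on {..<(m::nat)} J" "u < m"
  obtains Ju where "Ju \<in> J" "u \<in> Ju" "\<And>Jl. Jl \<in> J \<Longrightarrow> u \<in> Jl \<Longrightarrow> Jl = Ju"
proof -
  have "u \<in> \<Union>J" using partition_onD1[OF assms(1)] assms(2) by (metis lessThan_iff)
  then obtain Ju where Ju: "Ju \<in> J" "u \<in> Ju" by (rule UnionE)
  have "Jl = Ju" if "Jl \<in> J" "u \<in> Jl" for Jl
  proof (rule ccontr)
    assume "Jl \<noteq> Ju"
    then have "Jl \<inter> Ju = {}" using disjointD[OF partition_onD2[OF assms(1)] that(1) Ju(1)] by simp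
    then show False using that(2) Ju(2) by blast
  qed
  then show ?thesis using that Ju by blast
qed

lemma finJ: "partition_on {..<(m::nat)} J \<Longrightarrow> finite J"
  by (metis partition_onD1 finite_UnionD finite_lessThan)

lemma pnorm_neg:
  assumes "partition_on {..<m} J" "0 < m"
  shows "pnorm n m J (\<lambda>i. - B i) \<le> pnorm n m J B"
proof (rule pnorm_le)
  fix x assume x: "adm n J x"
  obtain J0 where J0: "J0 \<in> J" using block_ex[OF assms] by blast
  define w where "w = (\<lambda>Jl (j::nat\<Rightarrow>nat). if Jl = J0 then -1 else (1::real))"
  have "(\<Prod>Jl\<in>J. w Jl (restrict i Jl)) = -1" for i
    unfolding w_def using prod.delta[OF finJ[OF assms(1)], of J0 "\<lambda>_. -1::real"] J0 by simp
  then have "FF n m J (\<lambda>i. - B i) x = FF n m J (\<lambda>i. B i * (\<Prod>Jl\<in>J. w Jl (restrict i Jl))) x"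
    by simp
  also have "\<dots> \<le> pnorm n m J B"
    by (rule FF_mult[OF assms(1) x]) (simp add: w_def)
  finally show "FF n m J (\<lambda>i. - B i) x \<le> pnorm n m J B" .
qed

lemma pnorm_sign:
  assumes "partition_on {..<m} J" "0 < m"
  shows "pnorm n m J (\<lambda>i. (-1)^k * B i) \<le> pnorm n m J B"
proof (cases "even k")
  case True then show ?thesis by simp
next
  case False
  then have "(-1::real)^k = -1" by (rule neg_one_odd_power)
  then show ?thesis using pnorm_neg[OF assms, of n B] by simp
qed

definition Eps :: "nat \<Rightarrow> (nat \<Rightarrow> real) set" where
  "Eps n = PiE {..<n} (\<lambda>_. {-1,1})"

lemma Eps_val: "e \<in> Eps n \<Longrightarrow> a < n \<Longrightarrow> e a = -1 \<or> e a = 1"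
  by (auto simp: Eps_def PiE_iff)

lemma Eps_fin: "finite (Eps n)" by (simp add: Eps_def finite_PiE)

lemma Eps_card: "card (Eps n) > 0"
proof -
  have "(\<lambda>k\<in>{..<n}. 1) \<in> Eps n" by (simp add: Eps_def)
  then show ?thesis using Eps_fin card_gt_0_iff by blast
qed

lemma eps_sum:
  assumes "a < n" "b < n"
  shows "(\<Sum>e\<in>Eps n. e a * e b) = (if a = b then real (card (Eps n)) else 0)"
proof (cases "a = b")
  case True
  have "(\<Sum>e\<in>Eps n. e a * e b) = (\<Sum>e\<in>Eps n. 1)"
    by (rule sum.cong) (use Eps_val assms True in fastforce)+
  then show ?thesis using True by simp
next
  case False
  define s where "s = (\<lambda>e::nat\<Rightarrow>real. e(a := - e a))"
  have ss: "e \<in> Eps n \<Longrightarrow> e(a := - e a) \<in> Eps n" for e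
    using assms Eps_val[of e n a] by (auto simp: Eps_def PiE_iff s_def extensional_def)
  have "(\<Sum>e\<in>Eps n. e a * e b) = (\<Sum>e\<in>Eps n. s e a * s e b)"
    by (rule sum.reindex_bij_witness[of _ s s]) (auto simp: ss s_def)
  also have "\<dots> = - (\<Sum>e\<in>Eps n. e a * e b)"
    using False by (simp add: s_def sum_negf)
  finally show ?thesis using False by simp
qed

lemma pnorm_pair:
  assumes P: "partition_on {..<m} J" and uv: "u < m" "v < m"
  shows "pnorm n m J (\<lambda>i. B i * (if i u = i v then 1 else 0)) \<le> pnorm n m J B"
proof (rule pnorm_le)
  fix x assume x: "adm n J x"
  obtain Ju where Ju: "Ju \<in> J" "u \<in> Ju" "\<And>Jl. Jl \<in> J \<Longrightarrow> u \<in> Jl \<Longrightarrow> Jl = Ju"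
    using block_ex[OF P uv(1)] by blast
  obtain Jv where Jv: "Jv \<in> J" "v \<in> Jv" "\<And>Jl. Jl \<in> J \<Longrightarrow> v \<in> Jl \<Longrightarrow> Jl = Jv"
    using block_ex[OF P uv(2)] by blast
  have fJ: "finite J" using finJ[OF P] .
  define N where "N = real (card (Eps n))"
  have Npos: "N > 0" using Eps_card N_def by simp
  define w where "w = (\<lambda>(e::nat\<Rightarrow>real) Jl (j::nat\<Rightarrow>nat). (if Jl = Ju then e (j u) else 1) * (if Jl = Jv then e (j v) else 1))"
  define I where "I = idx n {..<m}"
  define Pr where "Pr = (\<lambda>i. \<Prod>Jl\<in>J. x Jl (restrict i Jl))"
  have iuv: "i u < n" "i v < n" if "i \<in> I" for i
    using that uv by (auto simp: I_def idx_def PiE_iff)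
  have prodw: "(\<Prod>Jl\<in>J. w e Jl (restrict i Jl)) = e (i u) * e (i v)" for e i
  proof -
    have "(\<Prod>Jl\<in>J. w e Jl (restrict i Jl)) =
       (\<Prod>Jl\<in>J. if Jl = Ju then e (restrict i Jl u) else 1) * (\<Prod>Jl\<in>J. if Jl = Jv then e (restrict i Jl v) else 1)"
      unfolding w_def by (simp add: prod.distrib)
    also have "\<dots> = e (i u) * e (i v)"
      using prod.delta[OF fJ, of Ju "\<lambda>Jl. e (restrict i Jl u)"] prod.delta[OF fJ, of Jv "\<lambda>Jl. e (restrict i Jl v)"]
        Ju(1,2) Jv(1,2) by simp
    finally show ?thesis .
  qed
  have wb: "\<bar>w e Jl j\<bar> \<le> 1" if "e \<in> Eps n" "Jl \<in> J" "j \<in> idx n Jl" for e Jl j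
  proof -
    have a: "\<bar>e (j u)\<bar> \<le> 1" if "Jl = Ju"
      using Eps_val[OF \<open>e \<in> Eps n\<close>, of "j u"] \<open>j \<in> idx n Jl\<close> that Ju(2) by (auto simp: idx_def PiE_iff)
    have b: "\<bar>e (j v)\<bar> \<le> 1" if "Jl = Jv"
      using Eps_val[OF \<open>e \<in> Eps n\<close>, of "j v"] \<open>j \<in> idx n Jl\<close> that Jv(2) by (auto simp: idx_def PiE_iff)
    show ?thesis unfolding w_def using a b by (auto simp: abs_mult intro: mult_le_one)
  qed
  have FFe: "FF n m J (\<lambda>i. B i * (\<Prod>Jl\<in>J. w e Jl (restrict i Jl))) x = (\<Sum>i\<in>I. B i * (e (i u) * e (i v)) * Pr i)" for e
    unfolding FF_def I_def Pr_def prodw by simp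
  have "(\<Sum>e\<in>Eps n. FF n m J (\<lambda>i. B i * (\<Prod>Jl\<in>J. w e Jl (restrict i Jl))) x)
     = (\<Sum>i\<in>I. B i * (\<Sum>e\<in>Eps n. e (i u) * e (i v)) * Pr i)"
    unfolding FFe sum_distrib_left sum_distrib_right
    by (subst sum.swap) (simp add: mult_ac)
  also have "\<dots> = (\<Sum>i\<in>I. B i * (N * (if i u = i v then 1 else 0)) * Pr i)"
    by (rule sum.cong) (simp_all add: eps_sum iuv N_def)
  also have "\<dots> = N * FF n m J (\<lambda>i. B i * (if i u = i v then 1 else 0)) x"
    unfolding FF_def I_def Pr_def by (simp add: sum_distrib_left mult_ac)
  finally have eq: "N * FF n m J (\<lambda>i. B i * (if i u = i v then 1 else 0)) x =
     (\<Sum>e\<in>Eps n. FF n m J (\<lambda>i. B i * (\<Prod>Jl\<in>J. w e Jl (restrict i Jl))) x)" by simp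
  also have "\<dots> \<le> (\<Sum>e\<in>Eps n. pnorm n m J B)"
    by (rule sum_mono) (rule FF_mult[OF P x], rule wb, auto)
  also have "\<dots> = N * pnorm n m J B" by (simp add: N_def)
  finally show "FF n m J (\<lambda>i. B i * (if i u = i v then 1 else 0)) x \<le> pnorm n m J B"
    using Npos by simp
qed

definition Mask :: "(nat \<times> nat) set \<Rightarrow> (nat \<Rightarrow> nat) \<Rightarrow> real" where
  "Mask G i = (if \<forall>(u,v)\<in>G. i u = i v then 1 else 0)"

lemma pnorm_mask:
  assumes P: "partition_on {..<m} J" and G: "G \<subseteq> {..<m} \<times> {..<m}"
  shows "pnorm n m J (\<lambda>i. B i * Mask G i) \<le> pnorm n m J B"
proof -
  have "finite G" by (rule finite_subset[OF G]) simp
  then show ?thesis using G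
  proof (induction G rule: finite_subset_induct)
    case empty then show ?case by (simp add: Mask_def)
  next
    case (insert a F)
    obtain u v where a: "a = (u, v)" by force
    have uv: "u < m" "v < m" using insert(2) a by auto
    have "(\<lambda>i. B i * Mask (insert a F) i) = (\<lambda>i. (B i * Mask F i) * (if i u = i v then 1 else 0))"
      by (auto simp: Mask_def a)
    then have "pnorm n m J (\<lambda>i. B i * Mask (insert a F) i) \<le> pnorm n m J (\<lambda>i. B i * Mask F i)"
      using pnorm_pair[OF P uv, where B="\<lambda>i. B i * Mask F i" and n=n] by simp
    then show ?case using insert.IH by linarith
  qed
qed



lemma prod_ind:
  assumes "finite X"
  shows "(\<Prod>a\<in>X. if Q a then 1 else 0) = (if \<forall>a\<in>X. Q a then 1 else (0::real))"
proof (cases "\<forall>a\<in>X. Q a")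
  case True then show ?thesis by simp
next
  case False
  then obtain a where "a \<in> X" "\<not> Q a" by blast
  then show ?thesis using False assms by (subst prod_zero) auto
qed

lemma expand_ind:
  assumes "finite A"
  shows "(if b \<and> (\<forall>a\<in>A. \<not> Q a) then 1 else 0::real) =
    (\<Sum>S\<in>Pow A. (-1)^card S * (if b \<and> (\<forall>a\<in>S. Q a) then 1 else 0))"
proof (cases b)
  case False then show ?thesis by simp
next
  case True
  define e where "e a = (if Q a then 1 else (0::real))" for a
  have "(\<Prod>a\<in>A. - e a + 1) = (\<Sum>X\<in>Pow A. (\<Prod>a\<in>X. - e a) * (\<Prod>a\<in>A-X. 1))"
    by (rule prod_add[OF assms])
  also have "\<dots> = (\<Sum>X\<in>Pow A. (-1)^card X * (if \<forall>a\<in>X. Q a then 1 else 0))"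
  proof (rule sum.cong)
    fix X assume "X \<in> Pow A"
    then have fX: "finite X" using assms finite_subset by auto
    have "(\<Prod>a\<in>X. - e a) = (-1)^card X * (\<Prod>a\<in>X. e a)"
      using fX by (induction X rule: finite_induct) simp_all
    then show "(\<Prod>a\<in>X. - e a) * (\<Prod>a\<in>A-X. 1) = (-1)^card X * (if \<forall>a\<in>X. Q a then 1 else 0)"
      using prod_ind[OF fX, of Q] by (simp add: e_def)
  qed simp
  finally have 1: "(\<Prod>a\<in>A. - e a + 1) = (\<Sum>X\<in>Pow A. (-1)^card X * (if \<forall>a\<in>X. Q a then 1 else 0))" .
  have "(\<Prod>a\<in>A. - e a + 1) = (\<Prod>a\<in>A. if \<not> Q a then 1 else 0)"
    by (rule prod.cong) (auto simp: e_def)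
  also have "\<dots> = (if \<forall>a\<in>A. \<not> Q a then 1 else 0)" by (rule prod_ind[OF assms])
  finally show ?thesis using 1 True by simp
qed

lemma eq_had: "e_q q d (hadamard A M) i = e_q q d A i * M (\<lambda>k\<in>{..<d}. i (k*q))"
  by (auto simp: e_q_def hadamard_def)

theorem lemma5p2:
  fixes n q d :: nat and J K :: "nat set set" and A :: "(nat \<Rightarrow> nat) \<Rightarrow> real"
  assumes "q \<ge> 1" and "d \<ge> 1"
    and "partition_on {..<q*d} J"
    and "partition_on {..<d} K"
  shows "qnorm n q d J (hadamard A (ind_tensor (Lset n d K)))
           \<le> 2 ^ (card K * (card K - 1) div 2) * qnorm n q d J A"
proof -
  note PJ = assms(3)
  note PK = assms(4)
  have m0: "0 < q*d" using assms(1,2) by simp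
  have kq: "k*q < q*d" if "k < d" for k using that assms(1) by (simp add: mult.commute)
  define same where "same k l \<longleftrightarrow> (\<exists>B\<in>K. k\<in>B \<and> l\<in>B)" for k l
  define rep where "rep B = (SOME k. k \<in> B)" for B :: "nat set"
  define PP where "PP = {p. p \<subseteq> K \<and> card p = 2}"
  define eqp where "eqp p i \<longleftrightarrow> (\<forall>B\<in>p. \<forall>B'\<in>p. i (rep B * q) = i (rep B' * q))" for p and i :: "nat \<Rightarrow> nat"
  define E0 where "E0 i \<longleftrightarrow> (\<forall>k<d. \<forall>l<d. same k l \<longrightarrow> i (k*q) = i (l*q))" for i :: "nat \<Rightarrow> nat"
  define G where "G S = {(k*q, l*q) | k l. k<d \<and> l<d \<and> same k l} \<union>
      {(rep B * q, rep B' * q) | B B'. \<exists>p\<in>S. B\<in>p \<and> B'\<in>p}" for S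
  have fK: "finite K" using finJ[OF PK] .
  have Kcover: "\<exists>B\<in>K. k\<in>B" if "k < d" for k
    using partition_onD1[OF PK] that by (metis UnionE lessThan_iff)
  have Kdisj: "B = B'" if "B\<in>K" "B'\<in>K" "k\<in>B" "k\<in>B'" for B B' k
  proof (rule ccontr)
    assume "B \<noteq> B'"
    then have "B \<inter> B' = {}" using disjointD[OF partition_onD2[OF PK] that(1,2)] by simp
    then show False using that(3,4) by blast
  qed
  have Ksub: "B \<subseteq> {..<d}" if "B \<in> K" for B using blocks_sub[OF PK that] .
  have rep_in: "rep B \<in> B" if "B \<in> K" for B
  proof -
    have "B \<noteq> {}" using partition_onD3[OF PK] that by auto
    then show ?thesis unfolding rep_def by (metis some_in_eq)
  qed
  have rep_lt: "rep B < d" if "B \<in> K" for B using rep_in[OF that] Ksub[OF that] by auto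
  have fPP: "finite PP" unfolding PP_def using fK by simp
  have cardPP: "card PP = card K * (card K - 1) div 2"
    unfolding PP_def using n_subsets[OF fK, of 2] choose_two by simp
  have Gcases: "P x" if "x \<in> G S" "\<And>k l. x = (k*q, l*q) \<Longrightarrow> k < d \<Longrightarrow> l < d \<Longrightarrow> same k l \<Longrightarrow> P x"
     "\<And>B B' p. x = (rep B * q, rep B' * q) \<Longrightarrow> p \<in> S \<Longrightarrow> B \<in> p \<Longrightarrow> B' \<in> p \<Longrightarrow> P x" for x S P
    using that(1) unfolding G_def
  proof (elim UnE)
    assume "x \<in> {(k*q, l*q) | k l. k<d \<and> l<d \<and> same k l}"
    then obtain k l where "x = (k*q, l*q)" "k<d" "l<d" "same k l" by blast
    then show "P x" using that(2) by blast
  next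
    assume "x \<in> {(rep B * q, rep B' * q) | B B'. \<exists>p\<in>S. B\<in>p \<and> B'\<in>p}"
    then obtain B B' p where "x = (rep B * q, rep B' * q)" "p\<in>S" "B\<in>p" "B'\<in>p" by blast
    then show "P x" using that(3) by blast
  qed
  have G1: "(k*q, l*q) \<in> G S" if "k<d" "l<d" "same k l" for k l S
    unfolding G_def using that by blast
  have G2: "(rep B * q, rep B' * q) \<in> G S" if "p \<in> S" "B\<in>p" "B'\<in>p" for B B' p S
    unfolding G_def using that by blast
  have mask_eq: "Mask (G S) i = (if E0 i \<and> (\<forall>p\<in>S. eqp p i) then 1 else 0)" for S i
  proof -
    have iff: "(\<forall>(u,v)\<in>G S. i u = i v) \<longleftrightarrow> E0 i \<and> (\<forall>p\<in>S. eqp p i)"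
    proof
      assume H: "\<forall>(u,v)\<in>G S. i u = i v"
      have Hx: "i u = i v" if "(u,v) \<in> G S" for u v
        using H that by fastforce
      have "E0 i" unfolding E0_def
      proof (intro allI impI)
        fix k l assume "k < d" "l < d" "same k l"
        then show "i (k * q) = i (l * q)" by (rule Hx[OF G1])
      qed
      moreover have "eqp p i" if "p \<in> S" for p
        unfolding eqp_def
      proof (intro ballI)
        fix B B' assume "B \<in> p" "B' \<in> p"
        then show "i (rep B * q) = i (rep B' * q)" by (rule Hx[OF G2[OF that]])
      qed
      ultimately show "E0 i \<and> (\<forall>p\<in>S. eqp p i)" by blast
    next
      assume H: "E0 i \<and> (\<forall>p\<in>S. eqp p i)"
      show "\<forall>(u,v)\<in>G S. i u = i v"
      proof (rule ballI)
        fix x assume "x \<in> G S"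
        then show "case x of (u,v) \<Rightarrow> i u = i v"
        proof (rule Gcases)
          fix k l assume a: "x = (k*q, l*q)" "k < d" "l < d" "same k l"
          have "i (k*q) = i (l*q)" using H a(2-4) unfolding E0_def by blast
          then show ?thesis using a(1) by simp
        next
          fix B B' p assume a: "x = (rep B * q, rep B' * q)" "p \<in> S" "B \<in> p" "B' \<in> p"
          have "i (rep B * q) = i (rep B' * q)" using H a(2-4) unfolding eqp_def by blast
          then show ?thesis using a(1) by simp
        qed
      qed
    qed
    show ?thesis unfolding Mask_def by (simp only: iff)
  qed
  have Gsub: "G S \<subseteq> {..<q*d} \<times> {..<q*d}" if "S \<subseteq> PP" for S
  proof
    fix x assume "x \<in> G S"
    then show "x \<in> {..<q*d} \<times> {..<q*d}"
    proof (rule Gcases)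
      fix k l assume "x = (k*q, l*q)" "k < d" "l < d"
      then show ?thesis using kq by simp
    next
      fix B B' p assume x: "x = (rep B * q, rep B' * q)" "p \<in> S" "B \<in> p" "B' \<in> p"
      then have "B \<in> K" "B' \<in> K" using \<open>S \<subseteq> PP\<close> unfolding PP_def by auto
      then show ?thesis using x kq[OF rep_lt[OF \<open>B \<in> K\<close>]] kq[OF rep_lt[OF \<open>B' \<in> K\<close>]] by simp
    qed
  qed
  have key: "(\<forall>k<d. \<forall>l<d. (i (k*q) = i (l*q) \<longleftrightarrow> same k l)) \<longleftrightarrow> E0 i \<and> (\<forall>p\<in>PP. \<not> eqp p i)" for i
  proof
    assume H: "\<forall>k<d. \<forall>l<d. (i (k*q) = i (l*q) \<longleftrightarrow> same k l)"
    have "E0 i" unfolding E0_def using H by blast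
    moreover have "\<not> eqp p i" if "p \<in> PP" for p
    proof
      assume ep: "eqp p i"
      from that obtain B1 B2 where p: "p = {B1, B2}" "B1 \<noteq> B2" "p \<subseteq> K"
        unfolding PP_def by (auto simp: card_2_iff)
      have B: "B1 \<in> K" "B2 \<in> K" using p by auto
      have "i (rep B1 * q) = i (rep B2 * q)" using ep p(1) unfolding eqp_def by blast
      then have "same (rep B1) (rep B2)" using H rep_lt B by blast
      then obtain B where "B \<in> K" "rep B1 \<in> B" "rep B2 \<in> B" unfolding same_def by blast
      then have "B = B1" "B = B2" using Kdisj rep_in B by blast+
      then show False using p by simp
    qed
    ultimately show "E0 i \<and> (\<forall>p\<in>PP. \<not> eqp p i)" by blast
  next
    assume H: "E0 i \<and> (\<forall>p\<in>PP. \<not> eqp p i)"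
    show "\<forall>k<d. \<forall>l<d. (i (k*q) = i (l*q) \<longleftrightarrow> same k l)"
    proof (intro allI impI iffI)
      fix k l assume kl: "k < d" "l < d" "same k l"
      then show "i (k*q) = i (l*q)" using H unfolding E0_def by blast
    next
      fix k l assume kl: "k < d" "l < d" and eq: "i (k*q) = i (l*q)"
      obtain Bk where Bk: "Bk \<in> K" "k \<in> Bk" using Kcover kl by blast
      obtain Bl where Bl: "Bl \<in> K" "l \<in> Bl" using Kcover kl by blast
      show "same k l"
      proof (cases "Bk = Bl")
        case True then show ?thesis unfolding same_def using Bk Bl by blast
      next
        case False
        have "{Bk, Bl} \<in> PP" unfolding PP_def using False Bk Bl by auto
        moreover have "eqp {Bk, Bl} i"
        proof -
          have "i (rep Bk * q) = i (k*q)"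
            using H rep_lt[OF Bk(1)] kl rep_in[OF Bk(1)] Bk unfolding E0_def same_def by blast
          moreover have "i (rep Bl * q) = i (l*q)"
            using H rep_lt[OF Bl(1)] kl rep_in[OF Bl(1)] Bl unfolding E0_def same_def by blast
          ultimately show ?thesis unfolding eqp_def using eq by auto
        qed
        ultimately show ?thesis using H by blast
      qed
    qed
  qed
  have pt: "ind_tensor (Lset n d K) (\<lambda>k\<in>{..<d}. i (k*q)) =
      (\<Sum>S\<in>Pow PP. (-1)^card S * Mask (G S) i)" if i: "i \<in> idx n {..<q*d}" for i
  proof -
    have ri: "(\<lambda>k\<in>{..<d}. i (k*q)) \<in> idx n {..<d}"
      using i kq by (auto simp: idx_def PiE_iff)
    have "ind_tensor (Lset n d K) (\<lambda>k\<in>{..<d}. i (k*q)) =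
        (if (\<forall>k<d. \<forall>l<d. (i (k*q) = i (l*q) \<longleftrightarrow> same k l)) then 1 else 0)"
    proof -
      have "(\<lambda>k\<in>{..<d}. i (k*q)) \<in> Lset n d K \<longleftrightarrow> (\<forall>k<d. \<forall>l<d. (i (k*q) = i (l*q) \<longleftrightarrow> same k l))"
        unfolding Lset_def same_def using ri by auto
      then show ?thesis unfolding ind_tensor_def by presburger
    qed
    also have "\<dots> = (if E0 i \<and> (\<forall>p\<in>PP. \<not> eqp p i) then 1 else 0)" using key by simp
    also have "\<dots> = (\<Sum>S\<in>Pow PP. (-1)^card S * (if E0 i \<and> (\<forall>p\<in>S. eqp p i) then 1 else 0))"
      by (rule expand_ind[OF fPP])
    also have "\<dots> = (\<Sum>S\<in>Pow PP. (-1)^card S * Mask (G S) i)" by (simp add: mask_eq)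
    finally show ?thesis .
  qed
  define B0 where "B0 = e_q q d A"
  have "qnorm n q d J (hadamard A (ind_tensor (Lset n d K))) =
      pnorm n (q*d) J (\<lambda>i. \<Sum>S\<in>Pow PP. (-1)^card S * (B0 i * Mask (G S) i))"
    unfolding qnorm_def
  proof (rule pnorm_cong)
    fix i assume "i \<in> idx n {..<q*d}"
    note i = this
    have "e_q q d (hadamard A (ind_tensor (Lset n d K))) i =
      B0 i * (\<Sum>S\<in>Pow PP. (-1)^card S * Mask (G S) i)"
      unfolding eq_had B0_def pt[OF i] ..
    also have "\<dots> = (\<Sum>S\<in>Pow PP. B0 i * ((-1)^card S * Mask (G S) i))"
      by (rule sum_distrib_left)
    also have "\<dots> = (\<Sum>S\<in>Pow PP. (-1)^card S * (B0 i * Mask (G S) i))"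
      by (rule sum.cong) (simp_all add: mult.left_commute)
    finally show "e_q q d (hadamard A (ind_tensor (Lset n d K))) i =
      (\<Sum>S\<in>Pow PP. (-1)^card S * (B0 i * Mask (G S) i))" .
  qed
  also have "\<dots> \<le> (\<Sum>S\<in>Pow PP. pnorm n (q*d) J (\<lambda>i. (-1)^card S * (B0 i * Mask (G S) i)))"
    by (rule pnorm_sum[OF PJ]) (simp add: fPP)
  also have "\<dots> \<le> (\<Sum>S\<in>Pow PP. pnorm n (q*d) J B0)"
  proof (rule sum_mono)
    fix S assume "S \<in> Pow PP"
    then have "S \<subseteq> PP" by simp
    have "pnorm n (q*d) J (\<lambda>i. (-1)^card S * (B0 i * Mask (G S) i)) \<le> pnorm n (q*d) J (\<lambda>i. B0 i * Mask (G S) i)"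
      by (rule pnorm_sign[OF PJ m0])
    also have "\<dots> \<le> pnorm n (q*d) J B0"
      by (rule pnorm_mask[OF PJ Gsub[OF \<open>S \<subseteq> PP\<close>]])
    finally show "pnorm n (q*d) J (\<lambda>i. (-1)^card S * (B0 i * Mask (G S) i)) \<le> pnorm n (q*d) J B0" .
  qed
  also have "\<dots> = 2 ^ card PP * pnorm n (q*d) J B0"
    using fPP by (simp add: card_Pow)
  finally show ?thesis unfolding cardPP qnorm_def B0_def .
qed

end
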